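(* Assume the new-symbol weights are of product form $w^t_i=u(i)\,v(m_t)$. Let $x_{1:n}\in\mathcal X^n$ ($n\ge1$) have used alphabet size $m$ and counts $n_j$. Then the redundancy of the adaptive model $S^{\vec\beta^*}$ satisfies $$R^{\vec\beta^*}_S(x_{1:n}) \le \mathrm{CL}_w(\mathcal A) - (m-1)\ln m + \sum_{j\in\mathcal A}\tfrac12\ln n_j - \tfrac12\ln n + \tfrac32\,m\ln\ln\frac{2n}{m} + 2.33\,m + 0.86 .$$
   Context: Let $\mathcal X$ be a finite base alphabet. For $x_{1:n}\in\mathcal X^n$, let $n_i$ be the number of occurrences of $i$ in $x_{1:n}$, $\mathcal A=\{x_1,\dots,x_n\}$, $m=|\mathcal A|$. For $0\le t\le n$ let $\mathcal A_t=\{x_1,\dots,x_t\}$ ($\mathcal A_0=\emptyset$), $m_t=|\mathcal A_t|$, $n^t_i$ the number of occurrences of $i$ in $x_{1:t}$. Product-form weights: $u:\mathcal X\to(0,\infty)$ and $v:\{0,1,\dots\}\to(0,\infty)$ such that $w^t_i:=u(i)v(m_t)$ satisfies $\sum_{k\in\mathcal X\setminus\mathcal A_t}w^t_k\le1$ for all $t$. Adaptive model: $\beta^*_t:=m_t/\ln\frac{t+1}{m_t}$ for $t\ge1$, and $\beta^*_0\in(0,\infty)$ arbitrary; $S^{\vec\beta^*}(x_{t+1}=i\mid x_{1:t})=n^t_i/(t+\beta^*_t)$ if $n^t_i>0$ and $\beta^*_t w^t_i/(t+\beta^*_t)$ if $n^t_i=0$; $S^{\vec\beta^*}(x_{1:n})=\prod_{t=0}^{n-1}S^{\vec\beta^*}(x_{t+1}\mid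 x_{1:t})$. $\mathrm{CL}_w(\mathcal A):=\sum_{t\in\{0,\dots,n-1\}:\,x_{t+1}\notin\mathcal A_t}\ln(1/w^t_{x_{t+1}})$. Redundancy $R^{\vec\beta^*}_S(x_{1:n}):=\ln\big(n^{-n}\prod_{j\in\mathcal A}n_j^{n_j}\big)-\ln S^{\vec\beta^*}(x_{1:n})$. Natural logarithms. *)

theory Defs
  imports "HOL-Analysis.Analysis"
begin

text \<open>A sequence x_{1:n} is a list xs of length n; x_{t+1} = xs ! t.\<close>

definition alph :: "'a list \<Rightarrow> nat \<Rightarrow> 'a set" where
  "alph xs t = set (take t xs)"

definition msz :: "'a list \<Rightarrow> nat \<Rightarrow> nat" where
  "msz xs t = card (alph xs t)"

definition cnt :: "'a list \<Rightarrow> nat \<Rightarrow> 'a \<Rightarrow> nat" where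
  "cnt xs t i = length (filter (\<lambda>y. y = i) (take t xs))"

definition wt :: "('a \<Rightarrow> real) \<Rightarrow> (nat \<Rightarrow> real) \<Rightarrow> 'a list \<Rightarrow> nat \<Rightarrow> 'a \<Rightarrow> real" where
  "wt u v xs t i = u i * v (msz xs t)"

definition beta_star :: "real \<Rightarrow> 'a list \<Rightarrow> nat \<Rightarrow> real" where
  "beta_star b0 xs t = (if t = 0 then b0
     else real (msz xs t) / ln (real (t + 1) / real (msz xs t)))"

definition S_cond :: "real \<Rightarrow> ('a \<Rightarrow> real) \<Rightarrow> (nat \<Rightarrow> real) \<Rightarrow> 'a list \<Rightarrow> nat \<Rightarrow> 'a \<Rightarrow> real" where
  "S_cond b0 u v xs t i =
     (if cnt xs t i > 0 then real (cnt xs t i) / (real t + beta_star b0 xs t)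
      else beta_star b0 xs t * wt u v xs t i / (real t + beta_star b0 xs t))"

definition S_seq :: "real \<Rightarrow> ('a \<Rightarrow> real) \<Rightarrow> (nat \<Rightarrow> real) \<Rightarrow> 'a list \<Rightarrow> real" where
  "S_seq b0 u v xs = (\<Prod>t<length xs. S_cond b0 u v xs t (xs ! t))"

definition CL :: "('a \<Rightarrow> real) \<Rightarrow> (nat \<Rightarrow> real) \<Rightarrow> 'a list \<Rightarrow> real" where
  "CL u v xs = (\<Sum>t\<in>{t. t < length xs \<and> xs ! t \<notin> alph xs t}. ln (1 / wt u v xs t (xs ! t)))"

definition redundancy :: "real \<Rightarrow> ('a \<Rightarrow> real) \<Rightarrow> (nat \<Rightarrow> real) \<Rightarrow> 'a list \<Rightarrow> real" where
  "redundancy b0 u v xs =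
     ln (real (length xs) powi (- int (length xs)) *
         (\<Prod>j\<in>set xs. real (cnt xs (length xs) j) ^ cnt xs (length xs) j))
     - ln (S_seq b0 u v xs)"

end

theory Submission
  imports Defs
begin

lemma ln_upper_pade:
  fixes z :: real assumes "z \<ge> 0"
  shows "ln (1 + z) \<le> z * (6 + z) / (6 + 4 * z)"
proof -
  let ?g = "\<lambda>z::real. z * (6 + z) / (6 + 4 * z) - ln (1 + z)"
  have "?g 0 \<le> ?g z"
  proof (rule DERIV_nonneg_imp_increasing_open[OF assms])
    fix x :: real assume x: "0 < x" "x < z"
    have d: "(?g has_real_derivative ((6 + 2*x) * (6 + 4*x) - x*(6+x)*4) / (6+4*x)^2 - 1/(1+x)) (at x)"
      using x by (auto intro!: derivative_eq_intros simp: power2_eq_square field_simps)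
    have "((6 + 2*x) * (6 + 4*x) - x*(6+x)*4) / (6+4*x)^2 - 1/(1+x) = 4*x^3 / ((6+4*x)^2*(1+x))"
      using x by (simp add: divide_simps power2_eq_square power3_eq_cube) algebra
    also have "\<dots> \<ge> 0" using x by simp
    finally show "\<exists>y. (?g has_real_derivative y) (at x) \<and> 0 \<le> y" using d by blast
  next
    show "continuous_on {0..z} ?g"
      by (intro continuous_intros) (auto simp: add_pos_nonneg)
  qed
  then show ?thesis by simp
qed

lemma ln_lower_pade:
  fixes z :: real assumes "z \<ge> 0"
  shows "2 * z / (2 + z) \<le> ln (1 + z)"
proof -
  let ?g = "\<lambda>z::real. ln (1 + z) - 2 * z / (2 + z)"
  have "?g 0 \<le> ?g z"
  proof (rule DERIV_nonneg_imp_increasing_open[OF assms])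
    fix x :: real assume x: "0 < x" "x < z"
    have d: "(?g has_real_derivative 1/(1+x) - (2 * (2 + x) - 2*x) / (2+x)^2) (at x)"
      using x by (auto intro!: derivative_eq_intros simp: power2_eq_square field_simps)
    have "1/(1+x) - (2 * (2 + x) - 2*x) / (2+x)^2 = x^2 / ((2+x)^2*(1+x))"
      using x by (simp add: divide_simps power2_eq_square) algebra
    also have "\<dots> \<ge> 0" using x by simp
    finally show "\<exists>y. (?g has_real_derivative y) (at x) \<and> 0 \<le> y" using d by blast
  next
    show "continuous_on {0..z} ?g"
      by (intro continuous_intros) (auto simp: add_pos_nonneg)
  qed
  then show ?thesis by simp
qed

lemma ln_gt_inv: "x > 0 \<Longrightarrow> ln (x::real) \<ge> 1 - 1/x"
proof -
  assume x: "x > 0"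
  have "ln (1/x) \<le> 1/x - 1" using x by (intro ln_le_minus_one) auto
  then show ?thesis using x by (simp add: ln_div)
qed

lemma ln_diff_ge: "0 < q \<Longrightarrow> q \<le> p \<Longrightarrow> ln p - ln (q::real) \<ge> (p - q) / p"
proof -
  assume a: "0 < q" "q \<le> p"
  have "ln (p/q) \<ge> 1 - q/p" using ln_gt_inv[of "p/q"] a by simp
  moreover have "1 - q/p = (p-q)/p" using a by (simp add: field_simps)
  ultimately show ?thesis using a by (simp add: ln_div)
qed

lemma ln_diff_le: "0 < q \<Longrightarrow> 0 < p \<Longrightarrow> ln p - ln (q::real) \<le> (p - q) / q"
proof -
  assume a: "0 < q" "0 < p"
  have "ln (p/q) \<le> p/q - 1" using a by (intro ln_le_minus_one) auto
  moreover have "p/q - 1 = (p-q)/q" using a by (simp add: field_simps)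
  ultimately show ?thesis using a by (simp add: ln_div)
qed

lemma ln2_lo: "2/3 \<le> ln (2::real)" by (rule ln2_ge_two_thirds)
lemma ln2_hi: "ln (2::real) \<le> 25/36" by (rule ln2_le_25_over_36)

lemma ln32_lo: "2/5 \<le> ln (3/2::real)"
  using ln_lower_pade[of "1/2"] by (simp add: algebra_simps)
lemma ln32_hi: "ln (3/2::real) \<le> 13/32"
  using ln_upper_pade[of "1/2"] by (simp add: algebra_simps)
lemma ln54_lo: "2/9 \<le> ln (5/4::real)"
  using ln_lower_pade[of "1/4"] by (simp add: algebra_simps)
lemma ln54_hi: "ln (5/4::real) \<le> 25/112"
  using ln_upper_pade[of "1/4"] by (simp add: algebra_simps)
lemma ln74_hi: "ln (7/4::real) \<le> 9/16"
  using ln_upper_pade[of "3/4"] by (simp add: algebra_simps)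
lemma ln52_lo: "6/7 \<le> ln (5/2::real)"
  using ln_lower_pade[of "3/2"] by (simp add: algebra_simps)

lemma ln3_eq: "ln (3::real) = ln 2 + ln (3/2)"
  using ln_mult[of "2::real" "3/2"] by simp
lemma ln3_lo: "16/15 \<le> ln (3::real)" using ln3_eq ln2_lo ln32_lo by linarith
lemma ln3_hi: "ln (3::real) \<le> 25/36 + 13/32" using ln3_eq ln2_hi ln32_hi by linarith
lemma ln4_eq: "ln (4::real) = 2 * ln 2"
proof -
  have "ln (4::real) = ln (2*2)" by simp
  also have "\<dots> = ln 2 + ln 2" by (subst ln_mult) auto
  finally show ?thesis by simp
qed
lemma ln5_eq: "ln (5::real) = ln 4 + ln (5/4)"
  using ln_mult[of "4::real" "5/4"] by simp
lemma ln5_lo: "14/9 \<le> ln (5::real)" using ln5_eq ln4_eq ln2_lo ln54_lo by linarith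
lemma ln5_hi: "ln (5::real) \<le> 25/18 + 25/112" using ln5_eq ln4_eq ln2_hi ln54_hi by linarith
lemma ln52_eq: "ln (5/2::real) = ln 2 + ln (5/4)"
  using ln_mult[of "2::real" "5/4"] by simp
lemma ln52_hi: "ln (5/2::real) \<le> 25/36 + 25/112" using ln52_eq ln2_hi ln54_hi by linarith

definition Ef :: "nat \<Rightarrow> nat \<Rightarrow> real" where
  "Ef t m = ln (real (min t (3*m) choose m)) + ln (real (min t (3*m)) / real m)"
definition Lf :: "nat \<Rightarrow> nat \<Rightarrow> real" where
  "Lf t m = 3/2 * real m * ln (ln (max (real t / real m) 3) + 1/4)"
definition ff :: "nat \<Rightarrow> nat \<Rightarrow> real" where
  "ff t m = Ef t m + Lf t m"

lemma bin_step: "m \<le> Suc n \<Longrightarrow> real (Suc n - m) * real (Suc n choose m) = real (Suc n) * real (n choose m)"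
  using binomial_absorb_comp[of "Suc n" m] by (metis diff_Suc_1 of_nat_mult)

lemma ln_binom_step:
  assumes "m \<le> n"
  shows "ln (real (Suc n choose m)) - ln (real (n choose m)) = ln (real n + 1) - ln (real n + 1 - real m)"
proof -
  have p1: "real (n choose m) > 0" "real (Suc n choose m) > 0" using assms by auto
  have "real (Suc n - m) = real n + 1 - real m" using assms by (simp add: of_nat_diff)
  with bin_step[of m n] assms have e: "(real n + 1 - real m) * real (Suc n choose m) = (real n + 1) * real (n choose m)" by simp
  have pos: "real n + 1 - real m > 0" using assms by simp
  have "ln ((real n + 1 - real m) * real (Suc n choose m)) = ln ((real n + 1) * real (n choose m))" using e by simp
  then have "ln (real n + 1 - real m) + ln (real (Suc n choose m)) = ln (real n + 1) + ln (real (n choose m))"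
    using p1 pos by (simp add: ln_mult)
  then show ?thesis by simp
qed

lemma ln_inv_lower: "n > 0 \<Longrightarrow> 2 / (2 * n + 1) \<le> ln (1 + 1 / (n::real))"
proof -
  assume n: "n > 0"
  have "2 * (1/n) / (2 + 1/n) \<le> ln (1 + 1/n)" using ln_lower_pade[of "1/n"] n by simp
  moreover have "2 * (1/n) / (2 + 1/n) = 2 / (2*n+1)" using n by (simp add: field_simps)
  ultimately show ?thesis by simp
qed

lemma stepR:
  assumes m1: "1 \<le> m" and mn: "m \<le> n"
  shows "ln (1 + (real m / ln (real (n+1) / real m)) / real n) \<le> ff (n+1) m - ff n m"
proof -
  define N where "N = real n"
  define M where "M = real m"
  have M1: "M \<ge> 1" and MN: "M \<le> N" using m1 mn by (auto simp: N_def M_def)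
  have rn: "real (n+1) = N + 1" by (simp add: N_def)
  define L where "L = ln ((N+1)/M)"
  have L_lo: "L \<ge> 1 - M/(N+1)" unfolding L_def using ln_gt_inv[of "(N+1)/M"] M1 MN by simp
  have Lpos: "L > 0" unfolding L_def using M1 MN by simp
  have Rle: "ln (1 + (M / L) / N) \<le> M / (N * L)"
    using ln_add_one_self_le_self[of "(M/L)/N"] Lpos M1 MN by (simp add: mult.commute)
  show ?thesis
  proof (cases "n + 1 \<le> 3 * m")
    case True
    have mins: "min (n+1) (3*m) = n+1" "min n (3*m) = n" using True by auto
    have "real (n+1) / real m \<le> 3" using True m1 by (simp add: field_simps)
    moreover have "real n / real m \<le> real (n+1) / real m" by (simp add: divide_right_mono)
    ultimately have "max (real (n+1) / real m) 3 = 3" "max (real n / real m) 3 = 3" by auto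
    then have Leq: "Lf (n+1) m = Lf n m" unfolding Lf_def by simp
    have "Ef (n+1) m - Ef n m = ln (real (Suc n choose m)) - ln (real (n choose m)) + (ln ((N+1)/M) - ln (N/M))"
      unfolding Ef_def mins by (simp add: N_def M_def add.commute)
    also have "\<dots> = 2 * ln (N+1) - ln N - ln (N + 1 - M)"
      using ln_binom_step[OF mn] M1 MN by (simp add: ln_div N_def M_def)
    finally have Ed: "Ef (n+1) m - Ef n m = 2 * ln (N+1) - ln N - ln (N + 1 - M)" .
    have Npos: "N > 0" using M1 MN by simp
    have "1 + (M / L) / N \<le> 1 + M * (N+1) / (N * (N + 1 - M))"
    proof -
      have "L \<ge> (N + 1 - M)/(N+1)" using L_lo M1 MN by (simp add: field_simps)
      then have "M / L \<le> M / ((N + 1 - M)/(N+1))"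
        using M1 MN Lpos by (intro divide_left_mono) auto
      then have "(M/L)/N \<le> (M / ((N + 1 - M)/(N+1)))/N" by (rule divide_right_mono) (use Npos in auto)
      also have "\<dots> = M * (N+1) / (N * (N + 1 - M))" using M1 MN by (simp add: field_simps)
      finally show ?thesis by simp
    qed
    also have "\<dots> \<le> (N+1)^2 / (N * (N + 1 - M))"
    proof -
      have d: "N * (N + 1 - M) > 0" using M1 MN by simp
      have "1 + M * (N+1) / (N * (N + 1 - M)) = (N * (N + 1 - M) + M * (N+1)) / (N * (N + 1 - M))"
        using d by (simp add: field_simps)
      also have "\<dots> \<le> (N+1)^2 / (N * (N + 1 - M))"
        using d MN by (intro divide_right_mono) (auto simp: power2_eq_square algebra_simps)
      finally show ?thesis .
    qed
    finally have "ln (1 + (M / L) / N) \<le> ln ((N+1)^2 / (N * (N + 1 - M)))"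
      using Lpos Npos M1 by (intro ln_mono) (auto intro!: add_pos_nonneg)
    also have "\<dots> = 2 * ln (N+1) - ln N - ln (N + 1 - M)"
      using Npos MN by (simp add: ln_div ln_mult ln_realpow)
    finally show ?thesis unfolding ff_def rn using Leq Ed by (simp add: L_def N_def M_def)
  next
    case False
    have mins: "min (n+1) (3*m) = 3*m" "min n (3*m) = 3*m" using False by auto
    have Eeq: "Ef (n+1) m = Ef n m" unfolding Ef_def mins ..
    have n3: "n \<ge> 3 * m" using False by simp
    have x3: "N / M \<ge> 3" using n3 M1 by (simp add: N_def M_def field_simps)
    have u3: "(N+1) / M \<ge> N / M" using M1 by (simp add: divide_right_mono)
    have N3: "N \<ge> 3" using n3 m1 unfolding N_def by linarith
    have mx: "max ((N+1) / M) 3 = (N+1)/M" "max (N / M) 3 = N/M"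
      using x3 u3 by auto
    have Ld: "Lf (n+1) m - Lf n m = 3/2 * M * (ln (L + 1/4) - ln (ln (N/M) + 1/4))"
      unfolding Lf_def L_def rn M_def[symmetric] N_def[symmetric] mx by (simp add: algebra_simps)
    have "ln 3 \<le> ln (N/M)" using x3 by (intro ln_mono) auto
    then have lnx: "ln (N/M) \<ge> 1" using ln3_lo by linarith
    have lnle: "ln (N/M) \<le> L" unfolding L_def using x3 u3 by (intro ln_mono) auto
    then have L1: "L \<ge> 1" using lnx by linarith
    have diffL: "L - ln (N/M) = ln (1 + 1/N)"
      unfolding L_def using M1 MN by (simp add: ln_div field_simps)
    have "ln (L + 1/4) - ln (ln (N/M) + 1/4) \<ge> ((L + 1/4) - (ln (N/M) + 1/4)) / (L + 1/4)"
      using lnx lnle by (intro ln_diff_ge) auto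
    also have "((L + 1/4) - (ln (N/M) + 1/4)) = ln (1 + 1/N)" using diffL by simp
    finally have g1: "ln (L + 1/4) - ln (ln (N/M) + 1/4) \<ge> ln (1 + 1/N) / (L + 1/4)" .
    have g2: "ln (1 + 1/N) / (L + 1/4) \<ge> (2 / (2*N+1)) / (L + 1/4)"
      using ln_inv_lower[of N] N3 L1 by (intro divide_right_mono) auto
    have key: "M / (N * L) \<le> 3/2 * M * ((2 / (2*N+1)) / (L + 1/4))"
    proof -
      have "(2*N+1) * (L + 1/4) \<le> 3 * N * L"
      proof -
        have a: "N - 1 \<le> (N - 1) * L" using mult_left_mono[OF L1, of "N-1"] N3 by simp
        have b: "(2*N+1) * (L + 1/4) = 2*(N*L) + L + N/2 + 1/4" by (simp add: algebra_simps)
        have c: "(N - 1) * L = N*L - L" by (simp add: algebra_simps)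
        have d: "3 * N * L = 3 * (N*L)" by simp
        show ?thesis unfolding b d using a c N3 by linarith
      qed
      then have h0: "((2*N+1)*(L+1/4))/3 \<le> N*L" by simp
      have Dp: "0 < (N*L) * (((2*N+1)*(L+1/4))/3)" using N3 L1 by (intro mult_pos_pos) auto
      have h: "1/(N*L) \<le> 3/((2*N+1)*(L+1/4))"
        using divide_left_mono[OF h0 _ Dp, of 1] by simp
      have "M/(N*L) = M * (1/(N*L))" by simp
      also have "\<dots> \<le> M * (3/((2*N+1)*(L+1/4)))" using h M1 by (intro mult_left_mono) auto
      also have "\<dots> = 3/2 * M * ((2 / (2*N+1)) / (L + 1/4))" by simp
      finally show ?thesis .
    qed
    have "ln (1 + (M / L) / N) \<le> 3/2 * M * (ln (L + 1/4) - ln (ln (N/M) + 1/4))"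
    proof -
      have "3/2 * M * ((2 / (2*N+1)) / (L + 1/4)) \<le> 3/2 * M * (ln (L + 1/4) - ln (ln (N/M) + 1/4))"
        using g1 g2 M1 by (intro mult_left_mono) auto
      then show ?thesis using Rle key by linarith
    qed
    then show ?thesis unfolding ff_def rn using Eeq Ld by (simp add: L_def N_def M_def)
  qed
qed

lemma binA: "real (Suc n choose Suc k) = real (n choose k) * ((real n + 1) / (real k + 1))"
proof -
  have "real (Suc n) * real (n choose k) = real (Suc n choose Suc k) * real (Suc k)"
    using Suc_times_binomial_eq[of n k] by (metis of_nat_mult)
  then show ?thesis by (simp add: field_simps)
qed

lemma binB: "k \<le> n \<Longrightarrow> real (Suc n choose k) = real (n choose k) * ((real n + 1) / (real n + 1 - real k))"
proof -
  assume k: "k \<le> n"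
  have "real (Suc n - k) = real n + 1 - real k" using k by (simp add: of_nat_diff)
  with bin_step[of k n] k have e: "(real n + 1 - real k) * real (Suc n choose k) = (real n + 1) * real (n choose k)" by simp
  have "real n + 1 - real k > 0" using k by simp
  with e show ?thesis by (simp add: field_simps)
qed

lemma bin_3m2: "real ((3*m+2) choose (m+1)) = real ((3*m) choose m) * (((3*real m+2) * (3*real m+1)) / ((real m+1)*(2*real m+1)))"
proof -
  have e1: "3*m+2 = Suc (3*m+1)" "m+1 = Suc m" "3*m+1 = Suc (3*m)" by simp_all
  have "real ((3*m+2) choose (m+1)) = real (Suc (3*m+1) choose Suc m)" by (simp only: e1(1,2))
  also have "\<dots> = real ((3*m+1) choose m) * ((3*real m+2) / (real m + 1))" by (subst binA) simp
  also have "real ((3*m+1) choose m) = real (Suc (3*m) choose m)" by (simp only: e1(3))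
  also have "\<dots> = real ((3*m) choose m) * ((3*real m+1) / (2*real m+1))" by (subst binB) auto
  finally show ?thesis by (simp add: field_simps)
qed

lemma bin_3m3: "real ((3*m+3) choose (m+1)) = real ((3*m) choose m) * (((3*real m+3) * (3*real m+2) * (3*real m+1)) / ((real m+1)*(2*real m+2)*(2*real m+1)))"
proof -
  have e1: "3*m+3 = Suc (3*m+2)" "m+1 = Suc m" "3*m+2 = Suc (3*m+1)" "3*m+1 = Suc (3*m)" by simp_all
  have "real ((3*m+3) choose (m+1)) = real (Suc (3*m+2) choose Suc m)" by (simp only: e1(1,2))
  also have "\<dots> = real ((3*m+2) choose m) * ((3*real m+3) / (real m + 1))" by (subst binA) simp
  also have "real ((3*m+2) choose m) = real (Suc (3*m+1) choose m)" by (simp only: e1(3))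
  also have "\<dots> = real ((3*m+1) choose m) * ((3*real m+2) / (2*real m+2))" by (subst binB) auto
  also have "real ((3*m+1) choose m) = real (Suc (3*m) choose m)" by (simp only: e1(4))
  also have "\<dots> = real ((3*m) choose m) * ((3*real m+1) / (2*real m+1))" by (subst binB) auto
  finally show ?thesis by (simp add: field_simps)
qed

lemma lnl0: "2/9 \<le> ln (ln 3 + 1/4::real)"
proof -
  have "ln (5/4::real) \<le> ln (ln 3 + 1/4)" using ln3_lo by (intro ln_mono) auto
  then show ?thesis using ln54_lo by linarith
qed

lemma poly_caseA:
  fixes x :: real assumes "1 \<le> x" "x \<le> 3"
  shows "25/36 + (x-1)/2 + 1/x \<le> 7/4 * (((x+1)/2)^2 / x)"
proof -
  have "(x-1)*(x-3) \<le> 0" using assms by (intro mult_nonneg_nonpos) auto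
  then have q: "x^2 - 4*x + 3 \<le> 0" by (simp add: algebra_simps power2_eq_square)
  have "16*x*(25/36 + (x-1)/2 + 1/x) = (100/9)*x + 8*x^2 - 8*x + 16"
    using assms by (simp add: field_simps power2_eq_square)
  also have "\<dots> \<le> 7*(x+1)^2" using q assms by (simp add: power2_eq_square algebra_simps)
  also have "\<dots> = 16*x*(7/4 * (((x+1)/2)^2 / x))" using assms by (simp add: field_simps power2_eq_square)
  finally have "16*x*(25/36 + (x-1)/2 + 1/x) \<le> 16*x*(7/4 * (((x+1)/2)^2 / x))" .
  moreover have "(0::real) < 16*x" using assms by simp
  ultimately show ?thesis by (simp only: mult_le_cancel_left_pos)
qed

lemma stepN:
  assumes m1: "1 \<le> m" and mn: "m \<le> n"
  shows "ln (ln (real (n+1) / real m) + real m / real n) \<le> ff (n+1) (m+1) - ff n m + 1/4"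
proof -
  define N where "N = real n"
  define M where "M = real m"
  have M1: "M \<ge> 1" and MN: "M \<le> N" using m1 mn by (auto simp: N_def M_def)
  have rn: "real (n+1) = N + 1" "real (m+1) = M + 1" by (simp_all add: N_def M_def)
  define L where "L = ln ((N+1)/M)"
  have Lpos: "L > 0" unfolding L_def using M1 MN by simp
  have Npos: "N > 0" using M1 MN by simp
  have LMpos: "L + M/N > 0" using Lpos M1 Npos by (intro add_pos_pos) auto
  have goal_eq: "ln (ln (real (n+1) / real m) + real m / real n) = ln (L + M/N)"
    unfolding L_def rn by (simp add: N_def M_def)
  have xx': "(N+1)/(M+1) \<le> N/M" using M1 MN by (simp add: field_simps)
  have x'half: "(N/M + 1)/2 \<le> (N+1)/(M+1)"
  proof -
    have "(M-1)*(N-M) \<ge> 0" using M1 MN by simp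
    then show ?thesis using M1 MN by (simp add: field_simps algebra_simps)
  qed
  show ?thesis
  proof (cases "n \<le> 3 * m")
    case True
    have mins: "min (n+1) (3*(m+1)) = n+1" "min n (3*m) = n" using True by auto
    have x3: "N/M \<le> 3" using True M1 by (simp add: N_def M_def field_simps)
    have x1: "1 \<le> N/M" using M1 MN by simp
    have "max ((N+1)/(M+1)) 3 = 3" "max (N/M) 3 = 3" using x3 xx' by auto
    then have Ld: "Lf (n+1) (m+1) - Lf n m = 3/2 * ln (ln 3 + 1/4)"
      unfolding Lf_def rn M_def[symmetric] N_def[symmetric] by (simp add: algebra_simps)
    have "Ef (n+1) (m+1) - Ef n m = ln (real (Suc n choose Suc m)) - ln (real (n choose m)) + (ln ((N+1)/(M+1)) - ln (N/M))"
      unfolding Ef_def mins rn[symmetric] by (simp add: N_def M_def)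
    also have "ln (real (Suc n choose Suc m)) = ln (real (n choose m)) + ln ((N+1)/(M+1))"
    proof -
      have bc: "real (Suc n choose Suc m) = real (n choose m) * ((N+1)/(M+1))"
        using binA[of n m] by (simp add: N_def M_def)
      show ?thesis unfolding bc by (rule ln_mult_pos) (use mn M1 Npos in auto)
    qed
    finally have Ed: "Ef (n+1) (m+1) - Ef n m = 2 * ln ((N+1)/(M+1)) - ln (N/M)" by simp
    define x where "x = N/M"
    have x1': "1 \<le> x" "x \<le> 3" unfolding x_def using x1 x3 by auto
    have hx: "2 * ln ((x+1)/2) \<le> 2 * ln ((N+1)/(M+1))"
      using x'half x1 unfolding x_def by (simp add: ln_mono)
    have Lle: "L \<le> 25/36 + (x-1)/2"
    proof -
      have "(N+1)/M \<le> x + 1" unfolding x_def using M1 by (simp add: field_simps)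
      then have "L \<le> ln (x+1)" unfolding L_def using M1 MN by (intro ln_mono) auto
      also have "ln (x+1) = ln 2 + ln ((x+1)/2)" using x1' by (simp add: ln_div)
      also have "ln ((x+1)/2) \<le> (x+1)/2 - 1" using x1' by (intro ln_le_minus_one) auto
      finally show ?thesis using ln2_hi by simp
    qed
    have MN': "M/N = 1/x" unfolding x_def by simp
    have "L + M/N \<le> 7/4 * (((x+1)/2)^2 / x)"
      using poly_caseA[of x] x1' Lle MN' by simp
    then have "ln (L + M/N) \<le> ln (7/4 * (((x+1)/2)^2 / x))"
      using LMpos by (intro ln_mono) auto
    also have "\<dots> = ln (7/4) + 2 * ln ((x+1)/2) - ln x"
      using x1' by (simp add: ln_mult ln_div ln_realpow)
    finally have "ln (L + M/N) \<le> 9/16 + 2 * ln ((N+1)/(M+1)) - ln (N/M)"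
      using ln74_hi hx unfolding x_def by linarith
    then show ?thesis unfolding goal_eq ff_def using Ed Ld lnl0 by linarith
  next
    case False
    then have n3: "n \<ge> 3*m + 1" by simp
    have mins0: "min n (3*m) = 3*m" using n3 by simp
    have E0: "Ef n m = ln (real ((3*m) choose m)) + ln 3"
      unfolding Ef_def mins0 using m1 by simp
    have x3: "N/M \<ge> 3" using n3 M1 by (simp add: N_def M_def field_simps)
    have MN3: "M/N \<le> 1/3" using x3 M1 MN by (simp add: field_simps)
    have C0: "real ((3*m) choose m) > 0" by simp
    show ?thesis
    proof (cases "n = 3*m+1")
      case True
      have mins: "min (n+1) (3*(m+1)) = 3*m+2" using True by simp
      have NM: "N = 3*M + 1" using True by (simp add: N_def M_def)
      define r where "r = ((3*M+2) * (3*M+1)) / ((M+1)*(2*M+1))"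
      have r3: "r \<ge> 3"
      proof -
        have MM: "1 \<le> M*M" using mult_mono[OF M1 M1] M1 by simp
        have e: "(3*M+2)*(3*M+1) - 3*((M+1)*(2*M+1)) = 3*(M*M) - 1" by (simp add: algebra_simps)
        have "3*((M+1)*(2*M+1)) \<le> (3*M+2)*(3*M+1)" using e MM by linarith
        moreover have "(M+1)*(2*M+1) > 0" using M1 by simp
        ultimately show ?thesis unfolding r_def by (simp add: pos_le_divide_eq)
      qed
      have E1: "Ef (n+1) (m+1) = ln (real ((3*m) choose m)) + ln r + ln ((3*M+2)/(M+1))"
      proof -
        have "Ef (n+1) (m+1) = ln (real ((3*m+2) choose (m+1))) + ln (real (3*m+2) / real (m+1))"
          by (simp only: Ef_def mins)
        also have "real ((3*m+2) choose (m+1)) = real ((3*m) choose m) * r" unfolding r_def M_def by (rule bin_3m2)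
        also have "ln (real ((3*m) choose m) * r) = ln (real ((3*m) choose m)) + ln r" using C0 r3 by (intro ln_mult_pos) auto
        also have "real (3*m+2) / real (m+1) = (3*M+2)/(M+1)" by (simp add: M_def add.commute)
        finally show ?thesis .
      qed
      have "ln 3 \<le> ln r" using r3 by (intro ln_mono) auto
      moreover have "ln (5/2) \<le> ln ((3*M+2)/(M+1))" using M1 by (intro ln_mono) (auto simp: field_simps)
      ultimately have Ed: "Ef (n+1) (m+1) - Ef n m \<ge> 6/7" using E1 E0 ln52_lo by linarith
      define l0 where "l0 = ln 3 + (1/4::real)"
      define l where "l = ln (N/M) + (1/4::real)"
      have l0lo: "l0 \<ge> 5/4" unfolding l0_def using ln3_lo by simp
      have x'3: "(N+1)/(M+1) \<le> 3" using NM M1 by (simp add: field_simps)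
      have "max ((N+1)/(M+1)) 3 = 3" "max (N/M) 3 = N/M" using x'3 x3 by auto
      then have Lfs: "Lf (n+1) (m+1) - Lf n m = 3/2 * ((M+1) * ln l0 - M * ln l)"
        unfolding Lf_def rn M_def[symmetric] N_def[symmetric] l0_def l_def by (simp add: algebra_simps)
      have ll0: "l0 \<le> l" unfolding l0_def l_def using x3 by (simp add: ln_mono)
      have "ln l - ln l0 \<le> (l - l0)/l0" using l0lo ll0 by (intro ln_diff_le) auto
      also have "l - l0 = ln (N/M) - ln 3" unfolding l_def l0_def by simp
      also have "\<dots> \<le> (N/M - 3)/3" using ln_diff_le[of 3 "N/M"] x3 by simp
      also have "N/M - 3 = 1/M" using NM M1 by (simp add: field_simps)
      finally have "ln l - ln l0 \<le> (1/M/3)/l0" using l0lo by (simp add: divide_right_mono)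
      then have "M * (ln l - ln l0) \<le> M * ((1/M/3)/l0)" using M1 by (intro mult_left_mono) auto
      also have "\<dots> = (1/3)/l0" using M1 by simp
      also have "\<dots> \<le> (1/3)/(5/4)" using l0lo by (intro divide_left_mono) auto
      finally have Mdiff: "M * (ln l - ln l0) \<le> 4/15" by simp
      have "ln l0 \<ge> 2/9" unfolding l0_def using lnl0 .
      then have Lfd: "Lf (n+1) (m+1) - Lf n m \<ge> -1/15" using Lfs Mdiff by (simp add: algebra_simps)
      have "L \<le> ln 5" unfolding L_def using NM M1 by (intro ln_mono) (auto simp: field_simps)
      moreover have "ln (L + M/N) \<le> L + M/N - 1" using LMpos by (intro ln_le_minus_one)
      ultimately have "ln (L + M/N) \<le> ln 5 + 1/3 - 1" using MN3 by linarith
      then show ?thesis unfolding goal_eq ff_def using Ed Lfd ln5_hi by linarith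
    next
      case False
      then have n32: "n \<ge> 3*m+2" using n3 by simp
      have mins: "min (n+1) (3*(m+1)) = 3*m+3" using n32 by simp
      define r where "r = ((3*M+3) * (3*M+2) * (3*M+1)) / ((M+1)*(2*M+2)*(2*M+1))"
      have r5: "r \<ge> 5"
      proof -
        have e: "(3*M+3)*(3*M+2)*(3*M+1) - 5*((M+1)*(2*M+2)*(2*M+1)) = (M+1)*(7*M+4)*(M-1)"
          by (simp add: algebra_simps)
        have "(M+1)*(7*M+4)*(M-1) \<ge> 0" using M1 by simp
        then have "5*((M+1)*(2*M+2)*(2*M+1)) \<le> (3*M+3)*(3*M+2)*(3*M+1)" using e by linarith
        moreover have "(M+1)*(2*M+2)*(2*M+1) > 0" using M1 by simp
        ultimately show ?thesis unfolding r_def by (simp add: pos_le_divide_eq)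
      qed
      have E1: "Ef (n+1) (m+1) = ln (real ((3*m) choose m)) + ln r + ln 3"
      proof -
        have "Ef (n+1) (m+1) = ln (real ((3*m+3) choose (m+1))) + ln (real (3*m+3) / real (m+1))"
          by (simp only: Ef_def mins)
        also have "real ((3*m+3) choose (m+1)) = real ((3*m) choose m) * r" unfolding r_def M_def by (rule bin_3m3)
        also have "ln (real ((3*m) choose m) * r) = ln (real ((3*m) choose m)) + ln r" using C0 r5 by (intro ln_mult_pos) auto
        also have "real (3*m+3) / real (m+1) = 3" by (simp add: field_simps)
        finally show ?thesis .
      qed
      have "ln 5 \<le> ln r" using r5 by (intro ln_mono) auto
      then have Ed: "Ef (n+1) (m+1) - Ef n m \<ge> 14/9" using E1 E0 ln5_lo by linarith
      define x' where "x' = (N+1)/(M+1)"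
      define x where "x = N/M"
      have x'3: "x' \<ge> 3" unfolding x'_def using n32 M1 by (simp add: N_def M_def field_simps)
      define l' where "l' = ln x' + (1/4::real)"
      define l where "l = ln x + (1/4::real)"
      have "ln 3 \<le> ln x'" using x'3 by (intro ln_mono) auto
      then have l'lo: "l' \<ge> 79/60" unfolding l'_def using ln3_lo by linarith
      have "max x' 3 = x'" "max x 3 = x" using x'3 x3 unfolding x_def by auto
      then have Lfs: "Lf (n+1) (m+1) - Lf n m = 3/2 * ((M+1) * ln l' - M * ln l)"
        unfolding Lf_def rn M_def[symmetric] N_def[symmetric] l'_def l_def x'_def x_def by (simp add: algebra_simps)
      have xx: "x' \<le> x" unfolding x_def x'_def using xx' .
      have ll': "l' \<le> l" unfolding l_def l'_def using xx x'3 by (simp add: ln_mono)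
      have "ln l - ln l' \<le> (l - l')/l'" using l'lo ll' by (intro ln_diff_le) auto
      also have "l - l' = ln x - ln x'" unfolding l_def l'_def by simp
      also have "\<dots> \<le> (x - x')/x'" using ln_diff_le[of x' x] x'3 xx by simp
      finally have "ln l - ln l' \<le> ((x - x')/x')/l'" using l'lo by (simp add: divide_right_mono)
      then have "M * (ln l - ln l') \<le> M * (((x - x')/x')/l')" using M1 by (intro mult_left_mono) auto
      also have "M * (((x - x')/x')/l') = ((x'-1)/x')/l'"
      proof -
        have a: "M*((N+1)/(M+1)) = (N+1) - (N+1)/(M+1)" using M1 by (simp add: field_simps)
        have b: "M*(N/M) = N" using M1 by simp
        have id: "M*(x - x') = x' - 1" unfolding x_def x'_def right_diff_distrib a b by simp
        have "M * (((x - x')/x')/l') = (M*(x - x'))/x'/l'" by simp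
        then show ?thesis using id by simp
      qed
      also have "\<dots> \<le> 1/l'" using x'3 l'lo by (intro divide_right_mono) auto
      finally have Mdiff: "M * (ln l - ln l') \<le> 1/l'" .
      have Lfd: "Lf (n+1) (m+1) - Lf n m \<ge> 3/2 * ln l' - 3/2 * (1/l')"
        using Lfs Mdiff by (simp add: algebra_simps)
      have h: "0 \<le> (M-1)*(N+1)" using M1 MN by simp
      have "1 + N \<le> M + M*N" using h by (simp add: algebra_simps)
      then have "(N+1)/M \<le> 2 * x'" unfolding x'_def using M1 MN by (simp add: field_simps)
      then have "L \<le> ln (2 * x')" unfolding L_def using M1 MN by (intro ln_mono) auto
      also have "\<dots> = ln 2 + ln x'" using x'3 by (simp add: ln_mult)
      finally have "L + M/N \<le> l' + 7/9" unfolding l'_def using ln2_hi MN3 by linarith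
      then have "ln (L + M/N) \<le> ln (l' + 7/9)" using LMpos by (intro ln_mono) auto
      also have "\<dots> \<le> ln l' + (7/9)/l'" using ln_diff_le[of l' "l' + 7/9"] l'lo by simp
      finally have lhs: "ln (L + M/N) \<le> ln l' + (7/9)/l'" .
      have "0 \<le> ln l'" using l'lo by simp
      have "(7/9)/l' + 3/2 * (1/l') = (41/18)/l'" by (simp add: field_simps)
      also have "\<dots> \<le> (41/18)/(79/60)" using l'lo by (intro divide_left_mono) auto
      finally have "(7/9)/l' + 3/2 * (1/l') \<le> 14/9 + 1/4" by simp
      then show ?thesis unfolding goal_eq ff_def using Ed Lfd lhs \<open>0 \<le> ln l'\<close> by linarith
    qed
  qed
qed

definition phi :: "nat \<Rightarrow> real" where "phi c = ln (real c) / 2 + (1 - 1 / real c) / 8"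

lemma countstep:
  fixes c :: real assumes c: "c \<ge> 1"
  shows "(c+1)*ln (c+1) - c * ln c - ln c \<le> 1 + ((ln (c+1)/2 + (1 - 1/(c+1))/8) - (ln c/2 + (1 - 1/c)/8))"
proof -
  have cp: "c > 0" using c by simp
  have "ln (1 + 1/c) \<le> (1/c) * (6 + 1/c) / (6 + 4 * (1/c))" using ln_upper_pade[of "1/c"] cp by simp
  also have "\<dots> = (6*c+1) / (c*(6*c+4))"
  proof -
    have d: "c \<noteq> 0" "6*c+4 \<noteq> 0" "c*(6*c+4) \<noteq> 0" "c * (6 * c + 4) \<noteq> 0" using cp by auto
    have "(1/c) * (6 + 1/c) = (6*c+1)/(c*c)" using d by (simp add: field_simps)
    moreover have "6 + 4 * (1/c) = (6*c+4)/c" using d by (simp add: field_simps)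
    ultimately show ?thesis using d by (simp add: divide_simps)
  qed
  finally have u: "ln (1 + 1/c) \<le> (6*c+1) / (c*(6*c+4))" .
  have "1 + 1/c = (c+1)/c" using cp by (simp add: field_simps)
  then have e: "ln (c+1) - ln c = ln (1 + 1/c)" using cp by (simp add: ln_div)
  have "(c + 1/2) * (ln (c+1) - ln c) \<le> (c + 1/2) * ((6*c+1) / (c*(6*c+4)))"
    using u e cp by (intro mult_left_mono) auto
  also have "\<dots> = 1 + 1 / (4*c*(3*c+2))"
  proof -
    have d: "c*(6*c+4) \<noteq> 0" "4*c*(3*c+2) \<noteq> 0" using cp by auto
    have "c*(6*c+4) = 2*(c*(3*c+2))" by (simp add: algebra_simps)
    moreover have "(c + 1/2) * (6*c+1) = 2*(c*(3*c+2)) + 1/2" by (simp add: algebra_simps)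
    ultimately have "(c + 1/2) * ((6*c+1) / (c*(6*c+4))) = (2*(c*(3*c+2)) + 1/2) / (2*(c*(3*c+2)))"
      by (simp add: times_divide_eq_right)
    also have "\<dots> = 1 + 1 / (4*c*(3*c+2))" using d by (simp add: field_simps)
    finally show ?thesis .
  qed
  also have "1 / (4*c*(3*c+2)) \<le> 1/(8*c*(c+1))"
  proof -
    have z: "0 \<le> 4*c*c" using cp by simp
    have w: "4*c*(3*c+2) - 8*c*(c+1) = 4*c*c" by (simp add: algebra_simps)
    have a: "8*c*(c+1) \<le> 4*c*(3*c+2)" using z w by linarith
    have b: "0 < (4*c*(3*c+2)) * (8*c*(c+1))" using cp by (intro mult_pos_pos) auto
    show ?thesis using divide_left_mono[OF a _ b, of 1] by simp
  qed
  also have "1/(8*c*(c+1)) = (1 - 1/(c+1))/8 - (1 - 1/c)/8"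
  proof -
    have d: "c \<noteq> 0" "c + 1 \<noteq> 0" using cp by auto
    have a: "1/c - 1/(c+1) = 1/(c*(c+1))" using d by (simp add: field_simps)
    have b: "(1 - 1/(c+1))/8 - (1 - 1/c)/8 = (1/c - 1/(c+1))/8" by (simp add: diff_divide_distrib)
    have c: "1/(8*c*(c+1)) = (1/(c*(c+1)))/8" by simp
    show ?thesis unfolding b c a ..
  qed
  finally show ?thesis by (simp add: algebra_simps)
qed

lemma tstep:
  fixes n :: real assumes n: "n \<ge> 1"
  shows "-(n+1)*ln (n+1) + (n+1) * ln n + ln (n+1)/2 - ln n/2 \<le> -1"
proof -
  have np: "n > 0" using n by simp
  have "1 + 1/n = (n+1)/n" using np by (simp add: field_simps)
  then have e: "ln (n+1) - ln n = ln (1 + 1/n)" using np by (simp add: ln_div)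
  have "1 = (n + 1/2) * (2 / (2*n+1))" using np by (simp add: field_simps)
  also have "\<dots> \<le> (n + 1/2) * ln (1 + 1/n)" using ln_inv_lower[OF np] np by (intro mult_left_mono) auto
  finally have "1 \<le> (n + 1/2) * (ln (n+1) - ln n)" using e by simp
  then show ?thesis by (simp add: algebra_simps)
qed

lemma entropy:
  assumes "1 \<le> k" "k \<le> N"
  shows "ln (real (N choose k)) \<le> real k * ln (real N / real k) + real (N - k) * ln (real N / real (N - k))"
proof (cases "k = N")
  case True then show ?thesis by simp
next
  case False
  then have kN: "k < N" using assms by simp
  define p where "p = real k / real N"
  define q where "q = real (N - k) / real N"
  have pq: "p + q = 1" unfolding p_def q_def using kN by (simp add: of_nat_diff field_simps)
  have pp: "p > 0" "q > 0" unfolding p_def q_def using assms kN by auto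
  have "real (N choose k) * p^k * q^(N-k) \<le> (\<Sum>j\<le>N. real (N choose j) * p^j * q^(N-j))"
    by (rule member_le_sum) (use assms pp in auto)
  also have "\<dots> = (p + q)^N" by (rule binomial_ring[symmetric])
  also have "\<dots> = 1" using pq by simp
  finally have le1: "real (N choose k) * p^k * q^(N-k) \<le> 1" .
  have Cp: "real (N choose k) > 0" using assms by simp
  have "ln (real (N choose k) * p^k * q^(N-k)) \<le> 0" using le1 Cp pp by (simp add: ln_le_zero_iff)
  then have "ln (real (N choose k)) + real k * ln p + real (N-k) * ln q \<le> 0"
    using Cp pp by (simp add: ln_mult ln_realpow)
  moreover have "ln p = - ln (real N / real k)" unfolding p_def using assms by (simp add: ln_div)
  moreover have "ln q = - ln (real N / real (N-k))" unfolding q_def using assms kN by (simp add: ln_div)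
  ultimately show ?thesis by simp
qed

lemma piece:
  fixes x a b B C :: real
  assumes "1 \<le> a" "a \<le> x" "x \<le> b" "ln b \<le> B" "C \<le> ln (2*a)" "0 < C"
  shows "ln x + (6*x-5)/(6*x-2) + 3/2/ln(2*x) \<le> B + (6*b-5)/(6*b-2) + 3/2/C"
proof -
  have "ln x \<le> ln b" using assms by (intro ln_mono) auto
  moreover have "(6*x-5)/(6*x-2) \<le> (6*b-5)/(6*b-2)"
  proof -
    have e1: "(6*x-5)/(6*x-2) = 1 - 3/(6*x-2)" using assms by (simp add: field_simps)
    have e2: "(6*b-5)/(6*b-2) = 1 - 3/(6*b-2)" using assms by (simp add: field_simps)
    have "3/(6*b-2) \<le> 3/(6*x-2)" using assms by (intro divide_left_mono) (auto intro!: mult_pos_pos)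
    then show ?thesis using e1 e2 by simp
  qed
  moreover have "3/2/ln(2*x) \<le> 3/2/C"
  proof -
    have "ln (2*a) \<le> ln (2*x)" using assms by (intro ln_mono) auto
    then have "C \<le> ln (2*x)" using assms by linarith
    then show ?thesis using assms by (intro divide_left_mono) (auto intro!: mult_pos_pos)
  qed
  ultimately show ?thesis using assms(4) by linarith
qed

lemma interval_bound:
  fixes x :: real assumes x: "1 \<le> x" "x \<le> 3"
  shows "ln x + (6*x-5)/(6*x-2) + 3/2/ln(2*x) \<le> 3"
proof -
  have l4: "4/3 \<le> ln (4::real)" using ln4_eq ln2_lo by simp
  consider "x \<le> 5/4" | "5/4 \<le> x" "x \<le> 3/2" | "3/2 \<le> x" "x \<le> 2" | "2 \<le> x" "x \<le> 5/2" | "5/2 \<le> x"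
    by linarith
  then show ?thesis
  proof cases
    case 1
    have "ln x + (6*x-5)/(6*x-2) + 3/2/ln(2*x) \<le> 25/112 + (6*(5/4)-5)/(6*(5/4)-2) + 3/2/(2/3)"
      by (rule piece[of 1]) (use x 1 ln54_hi ln2_lo in auto)
    then show ?thesis by (rule order_trans) simp
  next
    case 2
    have "ln x + (6*x-5)/(6*x-2) + 3/2/ln(2*x) \<le> 13/32 + (6*(3/2)-5)/(6*(3/2)-2) + 3/2/(6/7)"
      by (rule piece[of "5/4"]) (use x 2 ln32_hi ln52_lo in auto)
    then show ?thesis by (rule order_trans) simp
  next
    case 3
    have "ln x + (6*x-5)/(6*x-2) + 3/2/ln(2*x) \<le> 25/36 + (6*2-5)/(6*2-2) + 3/2/(16/15)"
      by (rule piece[of "3/2"]) (use x 3 ln2_hi ln3_lo in auto)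
    then show ?thesis by (rule order_trans) simp
  next
    case 4
    have "ln x + (6*x-5)/(6*x-2) + 3/2/ln(2*x) \<le> (25/36 + 25/112) + (6*(5/2)-5)/(6*(5/2)-2) + 3/2/(4/3)"
      by (rule piece[of 2]) (use x 4 ln52_hi l4 in auto)
    then show ?thesis by (rule order_trans) simp
  next
    case 5
    have "ln x + (6*x-5)/(6*x-2) + 3/2/ln(2*x) \<le> (25/36 + 13/32) + (6*3-5)/(6*3-2) + 3/2/(14/9)"
      by (rule piece[of "5/2"]) (use x 5 ln3_hi ln5_lo in auto)
    then show ?thesis by (rule order_trans) simp
  qed
qed

lemma lnl0_hi: "ln (ln 3 + 1/4::real) \<le> 303/1000"
proof -
  define z where "z = ln 3 - (3/4::real)"
  have z0: "0 \<le> z" and z1: "z \<le> 25/36 + 13/32 - 3/4" unfolding z_def using ln3_lo ln3_hi by auto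
  have "ln (ln 3 + 1/4) = ln (1 + z)" unfolding z_def by (simp add: algebra_simps)
  also have "\<dots> \<le> z * (6 + z) / (6 + 4 * z)" by (rule ln_upper_pade[OF z0])
  also have "\<dots> \<le> 303/1000"
  proof -
    have "z * z \<le> (25/36 + 13/32 - 3/4) * z" using z0 z1 by (intro mult_right_mono) auto
    then have "z * (6 + z) \<le> 303/1000 * (6 + 4 * z)" using z0 z1 by (simp add: algebra_simps)
    then show ?thesis using z0 by (simp add: divide_simps)
  qed
  finally show ?thesis .
qed

lemma arith_fin2: "(P::real) \<le> Q \<Longrightarrow> lC \<le> (25 / 36 + 13 / 32 + 13 / 16) * M \<Longrightarrow> 1/3 \<le> f \<Longrightarrow> l3 \<le> 25 / 36 + 13 / 32 \<Longrightarrow> 1 \<le> M \<Longrightarrow>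
  lC + l3 + 3 / 2 * P + M / 4 - 1 / 4 - f + M / 8 \<le> 3 / 2 * Q + 233 / 100 * M + 86 / 100"
  by (simp add: field_simps)

lemma ff11: "ff 1 1 = 3/2 * ln (ln 3 + 1/4)"
  by (simp add: ff_def Ef_def Lf_def)

lemma final_bound:
  assumes m1: "1 \<le> m" and mn: "m \<le> n"
  shows "ff n m + (real m - 1)/4 - ff 1 1 + real m / 8
    \<le> 3/2 * real m * ln (ln (2 * real n / real m)) + 2.33 * real m + 0.86"
proof -
  define N where "N = real n"
  define M where "M = real m"
  define x where "x = N/M"
  have M1: "M \<ge> 1" and MN: "M \<le> N" using m1 mn by (auto simp: N_def M_def)
  have x1: "x \<ge> 1" unfolding x_def using M1 MN by simp
  have f11: "ff 1 1 \<ge> 1/3" using ff11 lnl0 by simp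
  have two: "2 * real n / real m = 2 * x" unfolding x_def N_def M_def by simp
  show ?thesis
  proof (cases "n \<le> 3 * m")
    case True
    have x3: "x \<le> 3" unfolding x_def using True M1 by (simp add: N_def M_def field_simps)
    have F1: "ff n m = ln (real (n choose m)) + ln x + 3/2 * M * ln (ln 3 + 1/4)"
    proof -
      have "max (real n / real m) 3 = 3" using x3 by (simp add: x_def N_def M_def)
      then show ?thesis using True unfolding ff_def Ef_def Lf_def by (simp add: x_def N_def M_def)
    qed
    moreover have Cb: "ln (real (n choose m)) \<le> M * ln x + M * ((6*x-5)/(6*x-2))"
    proof -
      have "ln (real (n choose m)) \<le> M * ln x + real (n - m) * ln (N / real (n - m))"
        using entropy[OF m1 mn] by (simp add: x_def N_def M_def)
      moreover have "real (n - m) * ln (N / real (n - m)) \<le> M * ((6*x-5)/(6*x-2))"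
      proof (cases "n = m")
        case True
        then have "x = 1" unfolding x_def N_def M_def using M1 M_def by simp
        then show ?thesis using True M1 by simp
      next
        case False
        define K where "K = N - M"
        have K: "real (n - m) = K" "K > 0" unfolding K_def N_def M_def using mn False by (auto simp: of_nat_diff)
        have "ln (N / K) = ln (1 + M/K)" using K by (simp add: K_def field_simps)
        also have "\<dots> \<le> (M/K) * (6 + M/K) / (6 + 4 * (M/K))" using K M1 by (intro ln_upper_pade) auto
        finally have "K * ln (N/K) \<le> K * ((M/K) * (6 + M/K) / (6 + 4 * (M/K)))"
          using K by (intro mult_left_mono) auto
        also have "\<dots> = M * ((6*K + M) / (6*K + 4*M))"
        proof -
          have d: "K \<noteq> 0" "6*K + 4*M \<noteq> 0" using K M1 by auto
          have a: "(M/K) * (6 + M/K) = M*(6*K+M)/(K*K)" using d by (simp add: field_simps)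
          have b: "6 + 4*(M/K) = (6*K+4*M)/K" using d by (simp add: field_simps)
          have d2: "K * K * (6*K + 4*M) \<noteq> 0" "K * K \<noteq> 0" using d by auto
          have "K * (M*(6*K+M)/(K*K) / ((6*K+4*M)/K)) = (K * K) * (M*(6*K+M)) / ((K*K) * (6*K+4*M))"
            using d by (simp add: divide_simps)
          also have "\<dots> = M * ((6*K + M) / (6*K + 4*M))" using d2 by simp
          finally show ?thesis unfolding a b .
        qed
        also have "(6*K + M) / (6*K + 4*M) = (6*x-5)/(6*x-2)"
        proof -
          have Mn: "M \<noteq> 0" using M1 by simp
          have a: "6*x-5 = (6*N-5*M)/M" "6*x-2 = (6*N-2*M)/M" unfolding x_def using Mn by (simp_all add: field_simps)
          have b: "6*K + M = 6*N-5*M" "6*K + 4*M = 6*N-2*M" unfolding K_def by simp_all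
          show ?thesis unfolding a b using Mn by simp
        qed
        finally show ?thesis using K by simp
      qed
      ultimately show ?thesis by linarith
    qed
    moreover have lx: "ln x \<le> 25/36 + 13/32"
    proof -
      have "ln x \<le> ln 3" using x1 x3 by (intro ln_mono) auto
      then show ?thesis using ln3_hi by linarith
    qed
    moreover have ib: "ln x + (6*x-5)/(6*x-2) + 3/2/ln(2*x) \<le> 3" using interval_bound x1 x3 by simp
    moreover have "ln (ln (2*x)) \<ge> 1 - 1/ln(2*x)"
    proof -
      have "ln (2*x) > 0" using x1 by simp
      then show ?thesis by (rule ln_gt_inv)
    qed
    moreover have Mb: "M * (ln x + (6*x-5)/(6*x-2) + 3/2 * ln (ln 3 + 1/4) + 3/8 - 3/2 * ln (ln (2*x)) - 2.33) \<le> 0"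
    proof -
      have "ln x + (6*x-5)/(6*x-2) + 3/2 * ln (ln 3 + 1/4) + 3/8 - 3/2 * ln (ln (2*x)) - 2.33 \<le> 0"
        using ib lnl0_hi \<open>ln (ln (2*x)) \<ge> 1 - 1/ln(2*x)\<close> by (simp add: algebra_simps)
      then show ?thesis using M1 by (simp add: mult_nonneg_nonpos)
    qed
    define l0 where "l0 = ln (ln 3 + 1/4::real)"
    define w where "w = (6*x-5)/(6*x-2)"
    define LL where "LL = ln (ln (2*x))"
    define lC where "lC = ln (real (n choose m))"
    have e1: "M * (ln x + w + 3/2 * l0 + 3/8 - 3/2 * LL - 2.33) = M*ln x + M*w + 3/2*(M*l0) + 3/8*M - 3/2*(M*LL) - 2.33*M"
      by (simp add: algebra_simps)
    have e2: "ff n m + (real m - 1)/4 - ff 1 1 + real m / 8 = lC + ln x + 3/2*(M*l0) + M/4 - 1/4 - ff 1 1 + M/8"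
      using F1 by (simp add: lC_def l0_def M_def algebra_simps diff_divide_distrib)
    have e3: "3/2 * real m * ln (ln (2 * real n / real m)) + 2.33 * real m + 0.86 = 3/2*(M*LL) + 233/100*M + 86/100"
      unfolding two by (simp add: LL_def M_def algebra_simps)
    have Mb0: "M * (ln x + w + 3/2 * l0 + 3/8 - 3/2 * LL - 2.33) \<le> 0"
      using Mb unfolding w_def l0_def LL_def .
    have Mb': "M*ln x + M*w + 3/2*(M*l0) + 3/8*M - 3/2*(M*LL) - 233/100*M \<le> 0"
      using Mb0 unfolding e1 by simp
    have Cb': "lC \<le> M * ln x + M * w" using Cb unfolding lC_def w_def .
    show ?thesis unfolding e2 e3 using Mb' Cb' lx f11 by linarith
  next
    case False
    have x3: "x \<ge> 3" unfolding x_def using False M1 by (simp add: N_def M_def field_simps)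
    have F1: "ff n m = ln (real ((3*m) choose m)) + ln 3 + 3/2 * M * ln (ln x + 1/4)"
    proof -
      have "max (real n / real m) 3 = x" using x3 by (simp add: x_def N_def M_def)
      moreover have "real (3*m) / real m = 3" using m1 by simp
      ultimately show ?thesis using False unfolding ff_def Ef_def Lf_def by (simp add: x_def N_def M_def)
    qed
    moreover have Cb: "ln (real ((3*m) choose m)) \<le> M * (25/36 + 13/32 + 13/16)"
    proof -
      have "ln (real ((3*m) choose m)) \<le> M * ln 3 + (2 * M) * ln (3/2)"
        using entropy[of m "3*m"] m1 by (simp add: M_def)
      also have "\<dots> \<le> M * (25/36 + 13/32) + (2*M) * (13/32)"
        using ln3_hi ln32_hi M1 by (intro add_mono mult_left_mono) auto
      finally show ?thesis by (simp add: algebra_simps)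
    qed
    moreover have "ln (ln x + 1/4) \<le> ln (ln (2*x))"
    proof -
      have "ln (2*x) = ln 2 + ln x" using x1 by (simp add: ln_mult)
      then have "ln x + 1/4 \<le> ln (2*x)" using ln2_lo by linarith
      moreover have "0 < ln x + 1/4" using ln_ge_zero[of x] x1 by linarith
      ultimately show ?thesis by (intro ln_mono) auto
    qed
    then have ll: "M * ln (ln x + 1/4) \<le> M * ln (ln (2*x))" using M1 by (intro mult_left_mono) auto
    define l1 where "l1 = ln (ln x + 1/4)"
    define LL where "LL = ln (ln (2*x))"
    define lC where "lC = ln (real ((3*m) choose m))"
    have e2: "ff n m + (real m - 1)/4 - ff 1 1 + real m / 8 = lC + ln 3 + 3/2*(M*l1) + M/4 - 1/4 - ff 1 1 + M/8"
      using F1 by (simp add: lC_def l1_def M_def algebra_simps diff_divide_distrib)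
    have e3: "3/2 * real m * ln (ln (2 * real n / real m)) + 2.33 * real m + 0.86 = 3/2*(M*LL) + 233/100*M + 86/100"
      unfolding two by (simp add: LL_def M_def algebra_simps)
    have e4: "M * (25/36 + 13/32 + 13/16) = (25/36 + 13/32 + 13/16) * M" by simp
    have ll': "M * l1 \<le> M * LL" using ll unfolding l1_def LL_def .
    have Cb': "lC \<le> (25/36 + 13/32 + 13/16) * M" using Cb unfolding lC_def e4 .
    show ?thesis unfolding e2 e3 by (rule arith_fin2[OF ll' Cb' f11 ln3_hi M1])
  qed
qed

lemma take_snoc_le: "t \<le> length ys \<Longrightarrow> take t (ys @ [x]) = take t ys" by simp

lemma alph_snoc: "t \<le> length ys \<Longrightarrow> alph (ys @ [x]) t = alph ys t"
  unfolding alph_def by simp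
lemma msz_snoc: "t \<le> length ys \<Longrightarrow> msz (ys @ [x]) t = msz ys t"
  unfolding msz_def using alph_snoc by metis
lemma cnt_snoc: "t \<le> length ys \<Longrightarrow> cnt (ys @ [x]) t i = cnt ys t i"
  unfolding cnt_def by simp
lemma beta_snoc: "t \<le> length ys \<Longrightarrow> beta_star b0 (ys @ [x]) t = beta_star b0 ys t"
  unfolding beta_star_def using msz_snoc by metis
lemma wt_snoc: "t \<le> length ys \<Longrightarrow> wt u v (ys @ [x]) t i = wt u v ys t i"
  unfolding wt_def using msz_snoc by metis
lemma S_cond_snoc: "t \<le> length ys \<Longrightarrow> S_cond b0 u v (ys @ [x]) t i = S_cond b0 u v ys t i"
  unfolding S_cond_def using cnt_snoc beta_snoc wt_snoc by metis

lemma alph_full: "alph ys (length ys) = set ys" unfolding alph_def by simp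
lemma msz_full: "msz ys (length ys) = card (set ys)" unfolding msz_def alph_full ..
lemma cnt_full_pos: "cnt ys (length ys) i > 0 \<longleftrightarrow> i \<in> set ys"
  unfolding cnt_def length_greater_0_conv by (auto simp: filter_empty_conv)

lemma cnt_full_snoc: "cnt (ys @ [x]) (length (ys @ [x])) i = cnt ys (length ys) i + (if i = x then 1 else 0)"
  unfolding cnt_def by simp

lemma cnt_full_snoc': "cnt (ys @ [x]) (Suc (length ys)) i = cnt ys (length ys) i + (if i = x then 1 else 0)"
  using cnt_full_snoc[of ys x i] by simp

lemma msz_bounds:
  assumes "1 \<le> t" "t \<le> length ys"
  shows "1 \<le> msz ys t" "msz ys t \<le> t"
proof -
  have ne: "take t ys \<noteq> []" using assms by auto
  show "1 \<le> msz ys t" unfolding msz_def alph_def using ne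
    by (simp add: Suc_leI card_gt_0_iff)
  have "card (set (take t ys)) \<le> length (take t ys)" by (rule card_length)
  then show "msz ys t \<le> t" unfolding msz_def alph_def using assms by simp
qed

lemma beta_pos:
  assumes "0 < b0" "t \<le> length ys"
  shows "0 < beta_star b0 ys t"
proof (cases "t = 0")
  case True then show ?thesis using assms by (simp add: beta_star_def)
next
  case False
  then have b: "1 \<le> msz ys t" "msz ys t \<le> t" using msz_bounds[of t ys] assms by auto
  have "real (msz ys t) < real (t+1)" using b by simp
  then have "1 < real (t + 1) / real (msz ys t)" using b by (simp add: field_simps)
  then have "0 < ln (real (t + 1) / real (msz ys t))" by simp
  then show ?thesis using False b unfolding beta_star_def by simp
qed

lemma S_cond_pos:
  assumes "0 < b0" "\<And>i. 0 < u i" "\<And>k. 0 < v k" "t \<le> length ys"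
  shows "0 < S_cond b0 u v ys t i"
proof -
  have bp: "0 < beta_star b0 ys t" using beta_pos assms by blast
  have wp: "0 < wt u v ys t i" unfolding wt_def using assms by simp
  show ?thesis unfolding S_cond_def using bp wp by (auto intro!: divide_pos_pos add_nonneg_pos)
qed

lemma S_seq_pos:
  assumes "0 < b0" "\<And>i. 0 < u i" "\<And>k. 0 < v k"
  shows "0 < S_seq b0 u v ys"
proof -
  have "\<And>t. t < length ys \<Longrightarrow> 0 < S_cond b0 u v ys t (ys ! t)"
    by (rule S_cond_pos) (use assms in auto)
  then show ?thesis unfolding S_seq_def by (intro prod_pos) auto
qed

lemma S_seq_snoc: "S_seq b0 u v (ys @ [x]) = S_seq b0 u v ys * S_cond b0 u v ys (length ys) x"
proof -
  have "S_seq b0 u v (ys @ [x]) = (\<Prod>t<Suc (length ys). S_cond b0 u v (ys @ [x]) t ((ys @ [x]) ! t))"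
    unfolding S_seq_def by simp
  also have "\<dots> = (\<Prod>t<length ys. S_cond b0 u v (ys @ [x]) t ((ys @ [x]) ! t)) * S_cond b0 u v (ys @ [x]) (length ys) x"
    by (simp add: prod.lessThan_Suc nth_append)
  also have "(\<Prod>t<length ys. S_cond b0 u v (ys @ [x]) t ((ys @ [x]) ! t)) = S_seq b0 u v ys"
    unfolding S_seq_def by (intro prod.cong) (auto simp: S_cond_snoc nth_append)
  also have "S_cond b0 u v (ys @ [x]) (length ys) x = S_cond b0 u v ys (length ys) x"
    by (simp add: S_cond_snoc)
  finally show ?thesis .
qed

lemma CL_snoc: "CL u v (ys @ [x]) = CL u v ys + (if x \<in> set ys then 0 else ln (1 / wt u v ys (length ys) x))"
proof -
  let ?P = "\<lambda>zs t. zs ! t \<notin> alph zs t"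
  have A: "{t. t < length (ys @ [x]) \<and> ?P (ys @ [x]) t} =
      (if x \<in> set ys then {t. t < length ys \<and> ?P ys t} else insert (length ys) {t. t < length ys \<and> ?P ys t})"
    by (auto simp: nth_append alph_snoc alph_full less_Suc_eq)
  have fin: "finite {t. t < length ys \<and> ?P ys t}" by simp
  have B: "(\<Sum>t\<in>{t. t < length ys \<and> ?P ys t}. ln (1 / wt u v (ys @ [x]) t ((ys @ [x]) ! t))) = CL u v ys"
    unfolding CL_def by (intro sum.cong) (auto simp: wt_snoc nth_append)
  show ?thesis
  proof (cases "x \<in> set ys")
    case True
    then show ?thesis unfolding CL_def[of u v "ys @ [x]"] A using B by (simp add: CL_def)
  next
    case False
    then show ?thesis unfolding CL_def[of u v "ys @ [x]"] A using B fin
      by (simp add: sum.insert wt_snoc CL_def)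
  qed
qed

lemma sum_snoc:
  fixes g :: "nat \<Rightarrow> real"
  shows "(\<Sum>j\<in>set (ys @ [x]). g (cnt (ys @ [x]) (length (ys @ [x])) j)) =
   (\<Sum>j\<in>set ys. g (cnt ys (length ys) j)) +
   (if x \<in> set ys then g (cnt ys (length ys) x + 1) - g (cnt ys (length ys) x) else g 1)"
proof (cases "x \<in> set ys")
  case True
  have "(\<Sum>j\<in>set (ys @ [x]). g (cnt (ys @ [x]) (length (ys @ [x])) j)) =
        (\<Sum>j\<in>set ys. g (cnt ys (length ys) j) + (if j = x then g (cnt ys (length ys) x + 1) - g (cnt ys (length ys) x) else 0))"
    using True by (intro sum.cong) (auto simp: cnt_full_snoc cnt_full_snoc')
  also have "\<dots> = (\<Sum>j\<in>set ys. g (cnt ys (length ys) j)) + (g (cnt ys (length ys) x + 1) - g (cnt ys (length ys) x))"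
    using True by (simp add: sum.distrib)
  finally show ?thesis using True by simp
next
  case False
  have c0: "cnt ys (length ys) x = 0" using cnt_full_pos[of ys x] False by simp
  have "(\<Sum>j\<in>set (ys @ [x]). g (cnt (ys @ [x]) (length (ys @ [x])) j)) =
        g (cnt (ys @ [x]) (length (ys @ [x])) x) + (\<Sum>j\<in>set ys. g (cnt (ys @ [x]) (length (ys @ [x])) j))"
    using False by (simp add: sum.insert)
  also have "(\<Sum>j\<in>set ys. g (cnt (ys @ [x]) (length (ys @ [x])) j)) = (\<Sum>j\<in>set ys. g (cnt ys (length ys) j))"
    using False by (intro sum.cong) (auto simp: cnt_full_snoc cnt_full_snoc')
  also have "cnt (ys @ [x]) (length (ys @ [x])) x = 1" using c0 by (simp add: cnt_full_snoc cnt_full_snoc')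
  finally show ?thesis using False by simp
qed

definition Qf :: "'a list \<Rightarrow> real" where
  "Qf ys = -(real (length ys) * ln (real (length ys))) +
     (\<Sum>j\<in>set ys. real (cnt ys (length ys) j) * ln (real (cnt ys (length ys) j)))"

definition Pot :: "'a list \<Rightarrow> real" where
  "Pot ys = -(real (card (set ys)) - 1) * ln (real (card (set ys)))
     + (\<Sum>j\<in>set ys. phi (cnt ys (length ys) j)) - ln (real (length ys)) / 2
     + ff (length ys) (card (set ys)) + real (card (set ys)) / 4 - ff 1 1 - 1/4"

lemma red_eq:
  assumes "ys \<noteq> []" "0 < S_seq b0 u v ys"
  shows "redundancy b0 u v ys = Qf ys - ln (S_seq b0 u v ys)"
proof -
  let ?n = "length ys"
  have n0: "real ?n > 0" using assms by simp
  have a: "real ?n powi (- int ?n) = inverse (real ?n ^ ?n)" by (simp add: power_int_minus)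
  have ap: "0 < inverse (real ?n ^ ?n)" using n0 by simp
  have cpos: "\<And>j. j \<in> set ys \<Longrightarrow> 0 < real (cnt ys ?n j)" using cnt_full_pos[of ys] by simp
  have pp: "0 < (\<Prod>j\<in>set ys. real (cnt ys ?n j) ^ cnt ys ?n j)"
    using cpos by (intro prod_pos) auto
  have "ln (real ?n powi (- int ?n) * (\<Prod>j\<in>set ys. real (cnt ys ?n j) ^ cnt ys ?n j))
        = ln (inverse (real ?n ^ ?n)) + ln (\<Prod>j\<in>set ys. real (cnt ys ?n j) ^ cnt ys ?n j)"
    unfolding a using ap pp by (rule ln_mult_pos)
  also have "ln (inverse (real ?n ^ ?n)) = -(real ?n * ln (real ?n))"
    using n0 by (simp add: ln_inverse ln_realpow)
  also have "ln (\<Prod>j\<in>set ys. real (cnt ys ?n j) ^ cnt ys ?n j) = (\<Sum>j\<in>set ys. ln (real (cnt ys ?n j) ^ cnt ys ?n j))"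
    using cpos by (intro ln_prod) auto
  also have "\<dots> = (\<Sum>j\<in>set ys. real (cnt ys ?n j) * ln (real (cnt ys ?n j)))"
    by (intro sum.cong) (auto simp: ln_realpow)
  finally show ?thesis unfolding redundancy_def Qf_def by simp
qed

lemma main:
  assumes b0: "0 < b0" and u: "\<And>i. 0 < u i" and v: "\<And>k. 0 < v k"
  shows "ys \<noteq> [] \<Longrightarrow> redundancy b0 u v ys - CL u v ys \<le> Pot ys"
proof (induction ys rule: rev_induct)
  case Nil then show ?case by simp
next
  case (snoc x ys)
  show ?case
  proof (cases "ys = []")
    case True
    have w: "0 < wt u v [x] 0 x" unfolding wt_def using u v by simp
    have S: "S_seq b0 u v [x] = wt u v [x] 0 x"
      unfolding S_seq_def S_cond_def using b0 by (simp add: cnt_def beta_star_def)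
    have Q: "Qf [x] = 0" unfolding Qf_def by (simp add: cnt_def)
    have "{t. t < length [x] \<and> [x] ! t \<notin> alph [x] t} = {0}" by (auto simp: alph_def)
    then have C: "CL u v [x] = ln (1 / wt u v [x] 0 x)" unfolding CL_def by simp
    have P: "Pot [x] = 0" unfolding Pot_def by (simp add: phi_def cnt_def)
    have "redundancy b0 u v [x] = - ln (wt u v [x] 0 x)"
      using red_eq[of "[x]" b0 u v] S Q w by simp
    then show ?thesis using True C P w by (simp add: ln_div)
  next
    case False
    have IH: "redundancy b0 u v ys - CL u v ys \<le> Pot ys" using snoc.IH False by simp
    define n where "n = length ys"
    define m where "m = card (set ys)"
    define c where "c = cnt ys n x"
    define N where "N = real n"
    define M where "M = real m"
    define L where "L = ln (real (n+1) / real m)"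
    define \<beta> where "\<beta> = beta_star b0 ys n"
    define w where "w = wt u v ys n x"
    have n1: "1 \<le> n" using False by (simp add: n_def Suc_leI)
    have mb: "1 \<le> m" "m \<le> n" using msz_bounds[of n ys] n1 by (auto simp: n_def m_def msz_full)
    have Npos: "N > 0" using n1 by (simp add: N_def)
    have Lpos: "L > 0" unfolding L_def using mb by simp
    have ne: "ys \<noteq> []" using False .
    have beq: "\<beta> = M / L" unfolding \<beta>_def beta_star_def L_def M_def m_def using ne
      by (simp add: n_def msz_full)
    have bpos: "\<beta> > 0" using beq Lpos mb by (simp add: M_def)
    have wpos: "w > 0" unfolding w_def wt_def using u v by simp
    have Spos: "0 < S_seq b0 u v ys" using S_seq_pos[OF b0 u v] .
    have Spos': "0 < S_seq b0 u v (ys @ [x])" using S_seq_pos[OF b0 u v] .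
    have Scpos: "0 < S_cond b0 u v ys n x" unfolding n_def by (rule S_cond_pos) (use b0 u v in auto)
    have redY: "redundancy b0 u v ys = Qf ys - ln (S_seq b0 u v ys)" using red_eq False Spos by blast
    have redYX: "redundancy b0 u v (ys @ [x]) = Qf (ys @ [x]) - ln (S_seq b0 u v ys) - ln (S_cond b0 u v ys n x)"
      using red_eq[of "ys @ [x]"] Spos' Spos Scpos by (simp add: S_seq_snoc ln_mult_pos n_def)
    define g where "g = (\<lambda>k::nat. real k * ln (real k))"
    have QY: "Qf ys = -(N * ln N) + (\<Sum>j\<in>set ys. g (cnt ys (length ys) j))"
      unfolding Qf_def g_def N_def n_def ..
    have QYX: "Qf (ys @ [x]) = -((N+1) * ln (N+1)) + (\<Sum>j\<in>set ys. g (cnt ys (length ys) j))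
        + (if x \<in> set ys then g (c + 1) - g c else g 1)"
    proof -
      have "Qf (ys @ [x]) = -(real (length (ys @ [x])) * ln (real (length (ys @ [x])))) +
           (\<Sum>j\<in>set (ys @ [x]). g (cnt (ys @ [x]) (length (ys @ [x])) j))"
        unfolding Qf_def g_def ..
      also have "real (length (ys @ [x])) = N + 1" by (simp add: N_def n_def)
      finally show ?thesis unfolding sum_snoc c_def n_def by simp
    qed
    have PY: "Pot ys = -(M - 1) * ln M + (\<Sum>j\<in>set ys. phi (cnt ys (length ys) j)) - ln N / 2
       + ff n m + M / 4 - ff 1 1 - 1/4"
      unfolding Pot_def M_def m_def N_def n_def ..
    have "ys \<noteq> []" by fact
    show ?thesis
    proof (cases "x \<in> set ys")
      case True
      have c1: "1 \<le> c" using cnt_full_pos[of ys x] True by (simp add: c_def n_def)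
      have setx: "set (ys @ [x]) = set ys" using True by auto
      have PYX: "Pot (ys @ [x]) = -(M - 1) * ln M + (\<Sum>j\<in>set ys. phi (cnt ys (length ys) j))
         + (phi (c+1) - phi c) - ln (N+1) / 2 + ff (n+1) m + M / 4 - ff 1 1 - 1/4"
      proof -
        have "Pot (ys @ [x]) = -(M - 1) * ln M + (\<Sum>j\<in>set (ys @ [x]). phi (cnt (ys @ [x]) (length (ys @ [x])) j))
          - ln (N+1) / 2 + ff (n+1) m + M / 4 - ff 1 1 - 1/4"
          unfolding Pot_def setx M_def m_def N_def n_def by simp
        then show ?thesis unfolding sum_snoc using True by (simp add: c_def n_def)
      qed
      have CLYX: "CL u v (ys @ [x]) = CL u v ys" using CL_snoc[of u v ys x] True by simp
      have Sc: "S_cond b0 u v ys n x = real c / (N + \<beta>)"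
        unfolding S_cond_def using c1 by (simp add: c_def \<beta>_def N_def)
      have lnS: "ln (S_cond b0 u v ys n x) = ln (real c) - ln N - ln (1 + \<beta>/N)"
      proof -
        have e: "N + \<beta> = N * (1 + \<beta>/N)" using Npos by (simp add: field_simps)
        have q: "0 < 1 + \<beta>/N" using Npos bpos by (simp add: add_pos_pos)
        have cp: "0 < real c" using c1 by simp
        have "ln (real c / (N * (1 + \<beta>/N))) = ln (real c) - ln (N * (1 + \<beta>/N))"
          using cp Npos q by (simp add: ln_div)
        also have "ln (N * (1 + \<beta>/N)) = ln N + ln (1 + \<beta>/N)" using Npos q by (rule ln_mult_pos)
        finally show ?thesis unfolding Sc e by simp
      qed
      have cs: "(real c+1)*ln (real c+1) - real c * ln (real c) - ln (real c) \<le> 1 + ((ln (real c+1)/2 + (1 - 1/(real c+1))/8) - (ln (real c)/2 + (1 - 1/real c)/8))"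
        using countstep[of "real c"] c1 by simp
      have ts: "-(N+1)*ln (N+1) + (N+1) * ln N + ln (N+1)/2 - ln N/2 \<le> -1"
        using tstep[of N] n1 by (simp add: N_def)
      have sr: "ln (1 + \<beta> / N) \<le> ff (n+1) m - ff n m"
        using stepR[OF mb] beq unfolding L_def M_def N_def by simp
      have phis: "phi (c+1) - phi c = (ln (real c+1)/2 + (1 - 1/(real c+1))/8) - (ln (real c)/2 + (1 - 1/real c)/8)"
        unfolding phi_def by (simp add: add.commute)
      have gs: "g (c+1) - g c = (real c+1)*ln (real c+1) - real c * ln (real c)" unfolding g_def by (simp add: add.commute)
      show ?thesis
        using IH unfolding redYX redY QYX QY PYX PY CLYX lnS using True cs ts sr phis gs
        by (simp add: algebra_simps)
    next
      case False
      have c0: "c = 0" using cnt_full_pos[of ys x] False by (simp add: c_def n_def)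
      have setx: "set (ys @ [x]) = insert x (set ys)" by auto
      have cardx: "card (set (ys @ [x])) = m + 1" using False by (simp add: m_def)
      have PYX: "Pot (ys @ [x]) = -M * ln (M+1) + (\<Sum>j\<in>set ys. phi (cnt ys (length ys) j))
         + phi 1 - ln (N+1) / 2 + ff (n+1) (m+1) + (M / 4 + 1/4) - ff 1 1 - 1/4"
      proof -
        have "Pot (ys @ [x]) = -M * ln (M+1) + (\<Sum>j\<in>set (ys @ [x]). phi (cnt (ys @ [x]) (length (ys @ [x])) j))
          - ln (N+1) / 2 + ff (n+1) (m+1) + (M / 4 + 1/4) - ff 1 1 - 1/4"
          unfolding Pot_def cardx M_def m_def N_def n_def by (simp add: add.commute add_divide_distrib)
        then show ?thesis unfolding sum_snoc using False by simp
      qed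
      have CLYX: "CL u v (ys @ [x]) = CL u v ys + ln (1 / w)" using CL_snoc[of u v ys x] False by (simp add: w_def n_def)
      have Sc: "S_cond b0 u v ys n x = \<beta> * w / (N + \<beta>)"
        unfolding S_cond_def using c0 by (simp add: c_def \<beta>_def N_def w_def)
      have lnS: "ln (S_cond b0 u v ys n x) = ln w - ln N - ln (L + M/N) + ln M"
      proof -
        have Mp: "M > 0" using mb by (simp add: M_def)
        have D: "L*N + M > 0" using Lpos Npos Mp by (simp add: add_pos_pos)
        have e1: "N * (L + M/N) = L*N + M" using Npos by (simp add: field_simps)
        have e2: "N + M/L = (L*N + M)/L" using Lpos by (simp add: field_simps)
        have "\<beta> * w / (N + \<beta>) = (M/L) * w / ((L*N + M)/L)" unfolding beq e2 ..
        also have "\<dots> = w * (M / (L*N + M))" using Lpos D by (simp add: field_simps)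
        also have "\<dots> = w * (M / (N * (L + M/N)))" unfolding e1 ..
        finally have A: "\<beta> * w / (N + \<beta>) = w * (M / (N * (L + M/N)))" .
        have q: "0 < L + M/N" using Lpos Npos Mp by (simp add: add_pos_pos)
        have "ln (w * (M / (N * (L + M/N)))) = ln w + (ln M - (ln N + ln (L + M/N)))"
          using wpos Mp Npos q by (simp add: ln_mult_pos ln_div)
        then show ?thesis unfolding Sc A by simp
      qed
      have ts: "-(N+1)*ln (N+1) + (N+1) * ln N + ln (N+1)/2 - ln N/2 \<le> -1"
        using tstep[of N] n1 by (simp add: N_def)
      have sn: "ln (L + M/N) \<le> ff (n+1) (m+1) - ff n m + 1/4"
        using stepN[OF mb] unfolding L_def M_def N_def by simp
      have ml: "M * (ln (M+1) - ln M) \<le> 1"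
      proof -
        have Mp: "M > 0" using mb by (simp add: M_def)
        have "1 + 1/M = (M+1)/M" using Mp by (simp add: field_simps)
        then have "ln (M+1) - ln M = ln (1 + 1/M)" using Mp by (simp add: ln_div)
        also have "\<dots> \<le> 1/M" using mb by (intro ln_add_one_self_le_self) (simp add: M_def)
        finally show ?thesis using mb by (simp add: M_def field_simps)
      qed
      have p1: "phi 1 = 0" by (simp add: phi_def)
      have g1: "g 1 = 0" by (simp add: g_def)
      have lw: "ln (1/w) = - ln w" using wpos by (simp add: ln_div)
      show ?thesis
        using IH unfolding redYX redY QYX QY PYX PY CLYX lnS using False ts sn ml p1 g1 lw
        by (simp add: ring_distribs)
    qed
  qed
qed

theorem theorem5:
  fixes xs :: "('a::finite) list" and u :: "'a \<Rightarrow> real" and v :: "nat \<Rightarrow> real" and b0 :: real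
  assumes "length xs \<ge> 1"
    and "\<And>i. u i > 0" and "\<And>k. v k > 0"
    and "\<And>t. t \<le> length xs \<Longrightarrow> (\<Sum>k\<in>UNIV - alph xs t. wt u v xs t k) \<le> 1"
    and "b0 > 0"
  shows "redundancy b0 u v xs
    \<le> CL u v xs - (real (card (set xs)) - 1) * ln (card (set xs))
      + (\<Sum>j\<in>set xs. ln (real (cnt xs (length xs) j)) / 2)
      - ln (real (length xs)) / 2
      + 3/2 * real (card (set xs)) * ln (ln (2 * real (length xs) / real (card (set xs))))
      + 2.33 * real (card (set xs)) + 0.86"
proof -
  have ne: "xs \<noteq> []" using assms(1) by auto
  have mainI: "redundancy b0 u v xs - CL u v xs \<le> Pot xs"
    by (rule main[OF assms(5) assms(2) assms(3) ne])
  define n where "n = length xs"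
  define m where "m = card (set xs)"
  have mb: "1 \<le> m" "m \<le> n" using msz_bounds[of n xs] assms(1) by (auto simp: n_def m_def msz_full)
  have sphi: "(\<Sum>j\<in>set xs. phi (cnt xs (length xs) j)) \<le> (\<Sum>j\<in>set xs. ln (real (cnt xs (length xs) j)) / 2) + real m / 8"
  proof -
    have "(\<Sum>j\<in>set xs. phi (cnt xs (length xs) j)) = (\<Sum>j\<in>set xs. ln (real (cnt xs (length xs) j)) / 2) + (\<Sum>j\<in>set xs. (1 - 1 / real (cnt xs (length xs) j)) / 8)"
      unfolding phi_def by (simp add: sum.distrib)
    moreover have "(\<Sum>j\<in>set xs. (1 - 1 / real (cnt xs (length xs) j)) / 8) \<le> (\<Sum>j\<in>set xs. 1/8)"
      by (intro sum_mono) auto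
    moreover have "(\<Sum>j\<in>set xs. (1::real)/8) = real m / 8" by (simp add: m_def)
    ultimately show ?thesis by linarith
  qed
  have fb: "ff n m + (real m - 1)/4 - ff 1 1 + real m / 8
    \<le> 3/2 * real m * ln (ln (2 * real n / real m)) + 2.33 * real m + 0.86"
    by (rule final_bound[OF mb])
  have fb': "ff n m + real m / 4 - 1/4 - ff 1 1 + real m / 8
    \<le> 3/2 * real m * ln (ln (2 * real n / real m)) + 2.33 * real m + 0.86"
    using fb by (simp add: diff_divide_distrib)
  have P: "Pot xs = -(real m - 1) * ln (real m) + (\<Sum>j\<in>set xs. phi (cnt xs (length xs) j)) - ln (real n) / 2
     + ff n m + real m / 4 - ff 1 1 - 1/4"
    unfolding Pot_def m_def n_def ..
  show ?thesis
    using mainI sphi fb' unfolding P m_def[symmetric] n_def[symmetric] by linarith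
qed

end
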